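(* Assume that $\mathfrak{c} = 2^{<\mathfrak{c}}$ and that $\mathfrak{c}$ is a regular cardinal, where $\mathfrak{c}=|\mathbb{R}|$. Then there are $2^{2^{\mathfrak{c}}}$ many pairwise distinct $\sigma$-algebras on $\mathbb{R}$ each of which contains $[\mathbb{R}]^{\leq\omega}$.
   Context: $[\mathbb{R}]^{\leq\omega}$ denotes the family of all countable (finite or countably infinite) subsets of $\mathbb{R}$. $2^{<\mathfrak{c}} = \sup\{2^\lambda : \lambda<\mathfrak{c}\ \text{a cardinal}\}$. *)

theory Defs
  imports "HOL-Analysis.Analysis"
begin

text \<open>The assumption c = 2^(<c): every cardinal lambda < c satisfies
  2^lambda <= c. Cardinals below c are represented by subsets of the reals.
  (The inequality c <= 2^(<c) holds in ZFC anyway.)\<close>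
definition continuum_eq_two_lt_continuum :: bool where
  "continuum_eq_two_lt_continuum \<longleftrightarrow>
     (\<forall>A :: real set. ordLess2 (card_of A) (card_of (UNIV :: real set))
        \<longrightarrow> ordLeq3 (card_of (Pow A)) (card_of (UNIV :: real set)))"

end

theory Submission
  imports Defs "HOL-Library.Countable_Set_Type"
begin

unbundle cardinal_syntax

abbreviation rr :: "real rel" where "rr \<equiv> card_of (UNIV :: real set)"

definition PP :: "(real \<times> real set) set" where
  "PP = (SIGMA a : UNIV. Pow (underS rr a))"

lemma rr_basic: "Card_order rr" "Field rr = UNIV" "\<not> finite (Field rr)"
  using card_of_Card_order[of "UNIV :: real set"] Field_card_of[of "UNIV :: real set"]
  by (auto simp: infinite_UNIV_char_0)

lemma PP_le:
  assumes "continuum_eq_two_lt_continuum"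
  shows "|PP| \<le>o rr"
  unfolding PP_def
proof (rule card_of_Sigma_ordLeq_infinite_Field[OF rr_basic(3) rr_basic(1)])
  show "|UNIV :: real set| \<le>o rr" by (rule ordLeq_refl[OF card_of_Card_order])
  show "\<forall>i\<in>UNIV. |Pow (underS rr i)| \<le>o rr"
    using assms card_of_underS[OF rr_basic(1)] rr_basic(2)
    unfolding continuum_eq_two_lt_continuum_def by auto
qed

lemma exists_g:
  assumes "continuum_eq_two_lt_continuum"
  shows "\<exists>g :: real \<times> real set \<Rightarrow> real. inj_on g PP"
proof -
  have "|PP| \<le>o |UNIV :: real set|" using PP_le[OF assms] .
  then obtain g :: "real \<times> real set \<Rightarrow> real" where "inj_on g PP"
    unfolding card_of_ordLeq[symmetric] by blast
  then show ?thesis by blast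
qed

lemma countable_not_cofinal:
  assumes reg: "regularCard rr" and E: "countable E"
  shows "\<not> cofinal E rr"
proof
  assume "cofinal E rr"
  then have "|E| =o rr" using reg rr_basic(2) unfolding regularCard_def by auto
  moreover have "|E| \<le>o |UNIV :: nat set|" using E countable_card_of_nat by blast
  ultimately have "|UNIV :: real set| \<le>o |UNIV :: nat set|"
    by (rule ordIso_ordLeq_trans[OF ordIso_symmetric])
  then have "countable (UNIV :: real set)" using countable_card_of_nat by blast
  then show False using uncountable_UNIV_real by blast
qed

lemma bound_countable:
  assumes reg: "regularCard rr" and E: "countable E"
  shows "\<exists>a. E \<subseteq> underS rr a"
proof -
  have nc: "\<not> (\<forall>b \<in> Field rr. \<exists>e \<in> E. b \<noteq> e \<and> (b, e) \<in> rr)"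
    using countable_not_cofinal[OF reg E] unfolding cofinal_def .
  then obtain b where b: "\<forall>e\<in>E. \<not> (b \<noteq> e \<and> (b, e) \<in> rr)"
    by meson
  have "\<exists>a \<in> Field rr. b \<noteq> a \<and> (b, a) \<in> rr"
    by (rule infinite_Card_order_limit[OF rr_basic(1) rr_basic(3)]) (simp add: rr_basic(2))
  then obtain a where a: "b \<noteq> a" "(b, a) \<in> rr" by blast
  have wo: "Well_order rr" using rr_basic(1) card_order_on_well_order_on by blast
  have wr: "wo_rel rr" using wo unfolding wo_rel_def .
  have tot: "Total rr" "antisym rr" "trans rr" "refl_on UNIV rr"
    using wo_rel.TOTAL[OF wr] wo_rel.ANTISYM[OF wr] wo_rel.TRANS[OF wr] wo_rel.REFL[OF wr] rr_basic(2)
    by simp_all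
  have "e \<in> underS rr a" if "e \<in> E" for e
  proof -
    have "(e, b) \<in> rr"
    proof (cases "e = b")
      case True then show ?thesis using tot(4) by (simp add: refl_on_def)
    next
      case False
      have "\<not> (b \<noteq> e \<and> (b, e) \<in> rr)" using b that by (rule bspec)
      then have "(b, e) \<notin> rr" using False by auto
      then show ?thesis using tot(1) False unfolding rr_basic(2) total_on_def by blast
    qed
    then have ea: "(e, a) \<in> rr" by (rule transD[OF tot(3) _ a(2)])
    have "e \<noteq> a"
    proof
      assume "e = a"
      then have "(a, b) \<in> rr" using \<open>(e,b) \<in> rr\<close> by simp
      then have "a = b" by (rule antisymD[OF tot(2) _ a(2)])
      then show False using a(1) by simp
    qed
    then show ?thesis using ea unfolding underS_def by auto
  qed
  then show ?thesis by blast
qed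

definition BB :: "(real \<times> real set \<Rightarrow> real) \<Rightarrow> real set \<Rightarrow> real set" where
  "BB g X = g ` {(a, X \<inter> underS rr a) | a. True}"

lemma key:
  assumes reg: "regularCard rr" and g: "inj_on g PP"
    and K: "countable K" and C: "countable C" and beta: "\<beta> \<notin> K"
  shows "\<not> BB g \<beta> \<subseteq> C \<union> \<Union>(BB g ` K)"
proof
  assume sub: "BB g \<beta> \<subseteq> C \<union> \<Union>(BB g ` K)"
  define t where "t X = (SOME x. x \<in> (X - \<beta>) \<union> (\<beta> - X))" for X
  have t: "t X \<in> (X - \<beta>) \<union> (\<beta> - X)" if "X \<in> K" for X
  proof -
    have "X \<noteq> \<beta>" using that beta by auto
    then have "\<exists>x. x \<in> (X - \<beta>) \<union> (\<beta> - X)" by auto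
    then show ?thesis unfolding t_def by (rule someI_ex)
  qed
  define Q where "Q = fst ` (PP \<inter> g -` C)"
  have "countable (PP \<inter> g -` C)" using countable_image_inj_Int_vimage[OF g C] .
  then have Qc: "countable Q" unfolding Q_def by auto
  have "countable (t ` K \<union> Q)" using K Qc by auto
  then obtain a where a: "t ` K \<union> Q \<subseteq> underS rr a" using bound_countable[OF reg] by blast
  have aP: "(a, \<beta> \<inter> underS rr a) \<in> PP" unfolding PP_def by auto
  have inB: "g (a, \<beta> \<inter> underS rr a) \<in> BB g \<beta>" unfolding BB_def by auto
  have notC: "g (a, \<beta> \<inter> underS rr a) \<notin> C"
  proof
    assume "g (a, \<beta> \<inter> underS rr a) \<in> C"
    then have "a \<in> Q" unfolding Q_def using aP by (intro image_eqI[of _ fst "(a, \<beta> \<inter> underS rr a)"]) auto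
    then have "a \<in> underS rr a" using a by auto
    then show False unfolding underS_def by auto
  qed
  have notK: "g (a, \<beta> \<inter> underS rr a) \<notin> BB g X" if X: "X \<in> K" for X
  proof
    assume "g (a, \<beta> \<inter> underS rr a) \<in> BB g X"
    then obtain a' where eq: "g (a, \<beta> \<inter> underS rr a) = g (a', X \<inter> underS rr a')"
      unfolding BB_def by auto
    have "(a', X \<inter> underS rr a') \<in> PP" unfolding PP_def by auto
    then have "(a, \<beta> \<inter> underS rr a) = (a', X \<inter> underS rr a')"
      using inj_onD[OF g eq aP] by blast
    then have "\<beta> \<inter> underS rr a = X \<inter> underS rr a" by auto
    moreover have "t X \<in> underS rr a" using a X by auto
    ultimately have "(t X \<in> \<beta>) = (t X \<in> X)" by blast
    then show False using t[OF X] by blast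
  qed
  have "g (a, \<beta> \<inter> underS rr a) \<in> C \<union> \<Union>(BB g ` K)" using sub inB by (rule subsetD)
  then show False using notC notK by auto
qed

definition II :: "(real \<times> real set \<Rightarrow> real) \<Rightarrow> real set set \<Rightarrow> real set set" where
  "II g S = {A. \<exists>C K. countable C \<and> countable K \<and> K \<subseteq> S \<and> A \<subseteq> C \<union> \<Union>(BB g ` K)}"

definition MM :: "(real \<times> real set \<Rightarrow> real) \<Rightarrow> real set set \<Rightarrow> real set set" where
  "MM g S = {A. A \<in> II g S \<or> - A \<in> II g S}"

lemma II_countable_union:
  assumes "\<And>i::nat. A i \<in> II g S"
  shows "(\<Union>i. A i) \<in> II g S"
proof -
  have "\<forall>i. \<exists>C K. countable C \<and> countable K \<and> K \<subseteq> S \<and> A i \<subseteq> C \<union> \<Union>(BB g ` K)"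
    using assms unfolding II_def by auto
  then obtain C K where CK: "\<And>i. countable (C i) \<and> countable (K i) \<and> K i \<subseteq> S \<and> A i \<subseteq> C i \<union> \<Union>(BB g ` K i)"
    by metis
  have c1: "countable (\<Union>i. C i)" using CK by auto
  have c2: "countable (\<Union>i. K i)" using CK by auto
  have c3: "(\<Union>i. K i) \<subseteq> S" using CK by auto
  have c4: "(\<Union>i. A i) \<subseteq> (\<Union>i. C i) \<union> \<Union>(BB g ` (\<Union>i. K i))"
  proof
    fix x assume "x \<in> (\<Union>i. A i)"
    then obtain i where "x \<in> A i" by auto
    then have "x \<in> C i \<union> \<Union>(BB g ` K i)" using CK by auto
    then show "x \<in> (\<Union>i. C i) \<union> \<Union>(BB g ` (\<Union>i. K i))" by auto
  qed
  show ?thesis unfolding II_def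
    by (rule CollectI, rule exI[of _ "\<Union>i. C i"], rule exI[of _ "\<Union>i. K i"]) (use c1 c2 c3 c4 in simp)
qed

lemma II_mono:
  assumes "A \<in> II g S" "B \<subseteq> A"
  shows "B \<in> II g S"
proof -
  obtain C K where "countable C" "countable K" "K \<subseteq> S" "A \<subseteq> C \<union> \<Union>(BB g ` K)"
    using assms(1) unfolding II_def by blast
  moreover have "B \<subseteq> C \<union> \<Union>(BB g ` K)" using assms(2) calculation(4) by (rule subset_trans)
  ultimately show ?thesis unfolding II_def by blast
qed

lemma MM_sigma: "sigma_algebra UNIV (MM g S)"
  unfolding sigma_algebra_iff2
proof (intro conjI allI impI ballI)
  show "MM g S \<subseteq> Pow UNIV" by blast
  have "{} \<in> II g S" unfolding II_def
    by (intro CollectI exI[of _ "{}"]) simp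
  then show "{} \<in> MM g S" unfolding MM_def by simp
  show "UNIV - s \<in> MM g S" if "s \<in> MM g S" for s
  proof -
    have e: "UNIV - s = - s" by blast
    show ?thesis using that unfolding MM_def e by (simp add: disj_commute)
  qed
  fix A :: "nat \<Rightarrow> real set" assume r: "range A \<subseteq> MM g S"
  show "(\<Union>i. A i) \<in> MM g S"
  proof (cases "\<exists>i. - A i \<in> II g S")
    case True
    then obtain i where "- A i \<in> II g S" by blast
    then have "- (\<Union>i. A i) \<in> II g S" by (rule II_mono) blast
    then show ?thesis unfolding MM_def by blast
  next
    case False
    have "A i \<in> II g S" for i
    proof -
      have "A i \<in> MM g S" using r by blast
      then show ?thesis using False unfolding MM_def by blast
    qed
    then have "(\<Union>i. A i) \<in> II g S" by (rule II_countable_union)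
    then show ?thesis unfolding MM_def by blast
  qed
qed

lemma MM_countable: "{A. countable A} \<subseteq> MM g S"
proof
  fix A :: "real set" assume "A \<in> {A. countable A}"
  then have "A \<in> II g S" unfolding II_def
    by (intro CollectI exI[of _ A] exI[of _ "{}"]) auto
  then show "A \<in> MM g S" unfolding MM_def by auto
qed

lemma not_UNIV:
  assumes reg: "regularCard rr" and g: "inj_on g PP"
    and K: "countable K" and C: "countable C"
  shows "\<not> UNIV \<subseteq> C \<union> \<Union>(BB g ` K)"
proof
  assume u: "UNIV \<subseteq> C \<union> \<Union>(BB g ` K)"
  have "K \<noteq> UNIV"
  proof
    assume "K = UNIV"
    then have "countable (UNIV :: real set set)" using K by simp
    then have "countable ((\<lambda>x::real. {x}) ` UNIV)" by (rule countable_subset[OF subset_UNIV])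
    then have "countable (UNIV :: real set)"
      by (rule countable_image_inj_on) (auto simp: inj_on_def)
    then show False using uncountable_UNIV_real by blast
  qed
  then obtain \<beta> where "\<beta> \<notin> K" by auto
  moreover have "BB g \<beta> \<subseteq> C \<union> \<Union>(BB g ` K)" using u by (rule subset_trans[OF subset_UNIV])
  ultimately show False using key[OF reg g K C] by blast
qed

lemma MM_inj:
  assumes reg: "regularCard rr" and g: "inj_on g PP"
  shows "inj (MM g)"
proof -
  have *: False if S1: "\<beta> \<in> S" and T1: "\<beta> \<notin> T" and ST: "MM g S = MM g T"
    for S T :: "real set set" and \<beta> :: "real set"
  proof -
    have sub0: "BB g \<beta> \<subseteq> {} \<union> \<Union>(BB g ` {\<beta>})" by simp
    have "BB g \<beta> \<in> II g S" unfolding II_def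
      by (rule CollectI, rule exI[of _ "{}"], rule exI[of _ "{\<beta>}"]) (use S1 sub0 in simp)
    then have "BB g \<beta> \<in> MM g S" unfolding MM_def by simp
    then have "BB g \<beta> \<in> II g T \<or> - BB g \<beta> \<in> II g T" using ST unfolding MM_def by simp
    then show False
    proof
      assume "BB g \<beta> \<in> II g T"
      then obtain C K where CK: "countable C" "countable K" "K \<subseteq> T" "BB g \<beta> \<subseteq> C \<union> \<Union>(BB g ` K)"
        unfolding II_def by blast
      have "\<beta> \<notin> K" using CK(3) T1 by blast
      from key[OF reg g CK(2) CK(1) this] CK(4) show False by simp
    next
      assume "- BB g \<beta> \<in> II g T"
      then obtain C K where CK: "countable C" "countable K" "K \<subseteq> T" "- BB g \<beta> \<subseteq> C \<union> \<Union>(BB g ` K)"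
        unfolding II_def by blast
      have "UNIV \<subseteq> C \<union> \<Union>(BB g ` (insert \<beta> K))"
      proof
        fix x :: real
        show "x \<in> C \<union> \<Union>(BB g ` (insert \<beta> K))"
        proof (cases "x \<in> BB g \<beta>")
          case True then show ?thesis by simp
        next
          case False then have "x \<in> C \<union> \<Union>(BB g ` K)" using CK(4) by blast
          then show ?thesis by auto
        qed
      qed
      moreover have "countable (insert \<beta> K)" using CK(2) by simp
      ultimately show False using not_UNIV[OF reg g _ CK(1)] by blast
    qed
  qed
  show ?thesis
  proof (rule injI)
    fix S T assume e: "MM g S = MM g T"
    show "S = T"
    proof (rule ccontr)
      assume "S \<noteq> T"
      then obtain \<beta> where "(\<beta> \<in> S \<and> \<beta> \<notin> T) \<or> (\<beta> \<in> T \<and> \<beta> \<notin> S)" by blast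
      then show False
      proof
        assume "\<beta> \<in> S \<and> \<beta> \<notin> T" then show False using *[of \<beta> S T] e by blast
      next
        assume "\<beta> \<in> T \<and> \<beta> \<notin> S" then show False using *[of \<beta> T S] e by simp
      qed
    qed
  qed
qed

theorem theorem3p10:
  assumes "continuum_eq_two_lt_continuum"
    and "regularCard (card_of (UNIV :: real set))"
  shows "\<exists>F. F \<subseteq> {M. sigma_algebra (UNIV :: real set) M \<and> {A. countable A} \<subseteq> M}
           \<and> ordIso2 (card_of F) (card_of (Pow (Pow (UNIV :: real set))))"
proof -
  obtain g :: "real \<times> real set \<Rightarrow> real" where g: "inj_on g PP"
    using exists_g[OF assms(1)] by (elim exE)
  define F where "F = range (MM g)"
  have 1: "F \<subseteq> {M. sigma_algebra (UNIV :: real set) M \<and> {A. countable A} \<subseteq> M}"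
  proof
    fix M assume "M \<in> F"
    then obtain S where "M = MM g S" unfolding F_def by (elim rangeE)
    then show "M \<in> {M. sigma_algebra (UNIV :: real set) M \<and> {A. countable A} \<subseteq> M}"
      using MM_sigma[of g S] MM_countable[of g S] by simp
  qed
  have "bij_betw (MM g) UNIV F"
    unfolding F_def bij_betw_def using MM_inj[OF assms(2) g] by simp
  then have "|UNIV :: real set set set| =o |F|" using card_of_ordIso by meson
  then have 2: "|F| =o |Pow (Pow (UNIV :: real set))|" by (simp add: ordIso_symmetric)
  show ?thesis using 1 2 by (intro exI[of _ F] conjI)
qed

end
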